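(* Let $\nu>-1$ and $p,q\in\mathbb{R}$. Then the inequalities $$(1-p)\frac{1}{\mathcal{I}_{\nu+1}(x)}+p\frac{\mathcal{I}_{\nu}(x)}{\mathcal{I}_{\nu+1}(x)}>1>(1-q)\frac{1}{\mathcal{I}_{\nu+1}(x)}+q\frac{\mathcal{I}_{\nu}(x)}{\mathcal{I}_{\nu+1}(x)}$$ hold for all $x\in(0,\infty)$ if and only if $p\geq\frac{\nu+1}{\nu+2}$ and $q\leq 0$.
   Context: For $\mu>-1$, $I_\mu(x)=\sum_{n\geq0}\frac{(x/2)^{\mu+2n}}{n!\,\Gamma(\mu+n+1)}$ is the modified Bessel function of the first kind, and $\mathcal{I}_\mu:\mathbb{R}\to[1,\infty)$ is the normalized modified Bessel function $$\mathcal{I}_{\mu}(x)=2^{\mu}\Gamma(\mu+1)x^{-\mu}I_{\mu}(x)=\sum_{n\geq0}\frac{(1/4)^n}{(\mu+1)_n\, n!}x^{2n},$$ where $(\mu+1)_n=\Gamma(\mu+n+1)/\Gamma(\mu+1)$ is the Pochhammer symbol. In particular $\mathcal{I}_{-1/2}(x)=\cosh x$ and $\mathcal{I}_{1/2}(x)=\frac{\sinh x}{x}$. *)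

theory Defs
  imports "HOL-Analysis.Analysis"
begin

definition normBesselI :: "real \<Rightarrow> real \<Rightarrow> real" where
  "normBesselI \<mu> x = (\<Sum>n. (1/4)^n / (pochhammer (\<mu> + 1) n * fact n) * x^(2*n))"

end

theory Submission
  imports Defs
begin

definition cf :: "real \<Rightarrow> nat \<Rightarrow> real" where
  "cf \<mu> n = (1/4)^n / (pochhammer (\<mu> + 1) n * fact n)"

lemma sums_less_strict:
  fixes f g :: "nat \<Rightarrow> real"
  assumes "\<And>n. f n \<le> g n" "f sums s" "g sums t" "f i < g i"
  shows "s < t"
proof -
  have S1: "(\<lambda>n. f n + (if n = i then (\<lambda>_. g i - f i) n else 0)) sums (s + (g i - f i))"
    by (rule sums_add[OF assms(2) sums_single])
  have L1: "\<And>n. f n + (if n = i then (\<lambda>_. g i - f i) n else 0) \<le> g n"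
    using assms(1) by auto
  have "s + (g i - f i) \<le> t" by (rule sums_le[OF L1 S1 assms(3)])
  thus ?thesis using assms(4) by simp
qed

lemma cf_pos: "\<mu> > -1 \<Longrightarrow> cf \<mu> n > 0"
  unfolding cf_def by (intro divide_pos_pos mult_pos_pos pochhammer_pos) auto

lemma cf_0[simp]: "cf \<mu> 0 = 1" by (simp add: cf_def)

lemma cf_Suc: "\<mu> > -1 \<Longrightarrow> cf \<mu> (Suc n) = cf \<mu> n / (4 * (\<mu> + 1 + n) * (n + 1))"
proof -
  assume h: "\<mu> > -1"
  have "pochhammer (\<mu>+1) n > 0" using h by (intro pochhammer_pos) auto
  moreover have "\<mu> + 1 + n > 0" using h by simp
  ultimately show ?thesis unfolding cf_def
    by (simp add: pochhammer_Suc field_simps)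
qed

lemma cf_shift: "\<nu> > -1 \<Longrightarrow> cf (\<nu>+1) n = cf \<nu> n * (\<nu>+1) / (\<nu>+1+n)"
proof -
  assume h: "\<nu> > -1"
  have e1: "pochhammer (\<nu>+1) (Suc n) = (\<nu>+1) * pochhammer (\<nu>+1+1) n"
    by (rule pochhammer_rec)
  have e2: "pochhammer (\<nu>+1) (Suc n) = pochhammer (\<nu>+1) n * (\<nu>+1+n)"
    by (rule pochhammer_Suc)
  have p1: "pochhammer (\<nu>+1+1) n > 0" using h by (intro pochhammer_pos) auto
  have p2: "pochhammer (\<nu>+1) n > 0" using h by (intro pochhammer_pos) auto
  have "\<nu>+1+n > 0" using h by simp
  have eq: "pochhammer (\<nu>+1+1) n = pochhammer (\<nu>+1) n * (\<nu>+1+n) / (\<nu>+1)"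
    using e1 e2 h by (simp add: field_simps)
  show ?thesis unfolding cf_def eq using h p2 \<open>\<nu>+1+n > 0\<close>
    by (simp add: field_simps)
qed

lemma cf_summable:
  assumes "\<mu> > -1"
  shows "summable (\<lambda>n. cf \<mu> n * x^(2*n))"
proof (rule summable_ratio_test[where c="1/2" and N="nat \<lceil>x^2\<rceil> + 1"])
  fix n assume n: "n \<ge> nat \<lceil>x^2\<rceil> + 1"
  have xn: "x^2 \<le> real n" using n by linarith
  have np: "real n \<ge> 1" using n by simp
  have c: "cf \<mu> n > 0" using cf_pos assms by auto
  have d: "4 * (\<mu> + 1 + n) * (n + 1) \<ge> 2 * x^2"
  proof -
    have "\<mu> + 1 + n \<ge> n" using assms by simp
    moreover have "(n::real) + 1 \<ge> 1" by simp
    ultimately have "(\<mu> + 1 + real n) * (real n + 1) \<ge> real n * 1"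
      by (intro mult_mono) auto
    thus ?thesis using xn unfolding of_nat_add of_nat_1 mult.assoc by linarith
  qed
  have dp: "4 * (\<mu> + 1 + n) * (n + 1) > 0" using assms by simp
  have c2: "cf \<mu> (Suc n) > 0" using cf_pos assms by auto
  have nn: "cf \<mu> (Suc n) * x^(2*Suc n) \<ge> 0" using c2 zero_le_even_power[of "2*Suc n" x] by simp
  have eqs: "cf \<mu> (Suc n) * x^(2*Suc n) = cf \<mu> n * x^(2*n) * (x^2 / (4 * (\<mu> + 1 + n) * (n + 1)))"
    using dp by (simp add: cf_Suc[OF assms] power_mult field_simps power2_eq_square)
  have "norm (cf \<mu> (Suc n) * x^(2*Suc n)) = cf \<mu> n * x^(2*n) * (x^2 / (4 * (\<mu> + 1 + n) * (n + 1)))"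
    using nn eqs by (metis real_norm_def abs_of_nonneg)
  also have "\<dots> \<le> cf \<mu> n * x^(2*n) * (1/2)"
    using d dp c by (intro mult_left_mono) (auto simp: field_simps power_mult)
  also have "\<dots> = 1/2 * norm (cf \<mu> n * x^(2*n))"
    using c by (simp add: abs_mult power_mult)
  finally show "norm (cf \<mu> (Suc n) * x^(2*Suc n)) \<le> 1/2 * norm (cf \<mu> n * x^(2*n))" .
qed simp

lemma nB_eq: "normBesselI \<mu> x = (\<Sum>n. cf \<mu> n * x^(2*n))"
  unfolding normBesselI_def cf_def by simp

lemma nB_sums: "\<mu> > -1 \<Longrightarrow> (\<lambda>n. cf \<mu> n * x^(2*n)) sums normBesselI \<mu> x"
  unfolding nB_eq using cf_summable summable_sums by blast

lemma nB_ge_finite: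
  assumes "\<mu> > -1" "finite S"
  shows "(\<Sum>n\<in>S. cf \<mu> n * x^(2*n)) \<le> normBesselI \<mu> x"
proof (rule sums_le[OF _ sums_If_finite_set[OF assms(2)] nB_sums[OF assms(1)]])
  fix n
  have "cf \<mu> n * x^(2*n) \<ge> 0"
    using cf_pos[OF assms(1), of n] zero_le_even_power[of "2*n" x] by simp
  thus "(if n \<in> S then cf \<mu> n * x^(2*n) else 0) \<le> cf \<mu> n * x^(2*n)" by simp
qed

lemma nB_gt1:
  assumes "\<mu> > -1" "x \<noteq> 0"
  shows "normBesselI \<mu> x > 1"
proof (rule sums_less_strict[OF _ sums_single[of 0 "\<lambda>_. 1"] nB_sums[OF assms(1)], where i=1])
  fix n
  have "cf \<mu> n * x^(2*n) \<ge> 0"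
    using cf_pos[OF assms(1), of n] zero_le_even_power[of "2*n" x] by simp
  thus "(if n = 0 then 1 else 0) \<le> cf \<mu> n * x^(2*n)" by auto
next
  show "(if (1::nat) = 0 then 1 else 0) < cf \<mu> 1 * x^(2*1)"
    using cf_pos[OF assms(1), of 1] assms(2) by simp
qed

lemma F1:
  assumes "\<nu> > -1" "x \<noteq> 0"
  shows "normBesselI (\<nu>+1) x < (1 - (\<nu>+1)/(\<nu>+2)) + (\<nu>+1)/(\<nu>+2) * normBesselI \<nu> x"
proof -
  define k where "k = (\<nu>+1)/(\<nu>+2)"
  have S: "(\<lambda>n. (if n = 0 then (\<lambda>_. 1 - k) n else 0) + k * (cf \<nu> n * x^(2*n))) sums ((1-k) + k * normBesselI \<nu> x)"
    by (intro sums_add sums_mult sums_single nB_sums assms)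
  have nu1: "\<nu> + 1 > -1" using assms by simp
  have fn: "\<And>n. cf \<nu> n * x^(2*n) \<ge> 0"
    using cf_pos[OF assms(1)] zero_le_even_power by (metis even_mult_iff even_numeral less_le mult_nonneg_nonneg)
  have rat: "\<And>n. n \<ge> 1 \<Longrightarrow> (\<nu>+1)/(\<nu>+1+real n) \<le> k"
    unfolding k_def using assms by (intro frac_le) auto
  have rat2: "(\<nu>+1)/(\<nu>+1+real (2::nat)) < k"
    unfolding k_def using assms by (intro divide_strict_left_mono) auto
  have g: "\<And>n. cf (\<nu>+1) n * x^(2*n) = (\<nu>+1)/(\<nu>+1+real n) * (cf \<nu> n * x^(2*n))"
    using cf_shift[OF assms(1)] by simp
  show ?thesis unfolding k_def[symmetric]
  proof (rule sums_less_strict[OF _ nB_sums[OF nu1] S, where i=2])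
    fix n
    show "cf (\<nu>+1) n * x^(2*n) \<le> (if n = 0 then (\<lambda>_. 1 - k) n else 0) + k * (cf \<nu> n * x^(2*n))"
    proof (cases "n = 0")
      case True thus ?thesis by simp
    next
      case False
      hence "(\<nu>+1)/(\<nu>+1+real n) * (cf \<nu> n * x^(2*n)) \<le> k * (cf \<nu> n * x^(2*n))"
        using rat fn by (intro mult_right_mono) auto
      thus ?thesis using False g by simp
    qed
  next
    have "cf \<nu> 2 * x^(2*2) > 0" using cf_pos[OF assms(1)] assms(2) by simp
    hence "(\<nu>+1)/(\<nu>+1+real (2::nat)) * (cf \<nu> 2 * x^(2*2)) < k * (cf \<nu> 2 * x^(2*2))"
      using rat2 by (intro mult_strict_right_mono) auto
    thus "cf (\<nu>+1) 2 * x^(2*2) < (if (2::nat) = 0 then (\<lambda>_. 1 - k) 2 else 0) + k * (cf \<nu> 2 * x^(2*2))"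
      using g[of 2] by simp
  qed
qed

lemma upperA:
  assumes "\<nu> > -1" "x^2 \<le> 1"
  shows "normBesselI \<nu> x \<le> normBesselI \<nu> 1 * x^4 + (1 + cf \<nu> 1 * x^2)"
proof -
  have S: "(\<lambda>n. cf \<nu> n * 1^(2*n) * x^4 + (if n \<in> {0,1} then cf \<nu> n * x^(2*n) else 0))
      sums (normBesselI \<nu> 1 * x^4 + (\<Sum>n\<in>{0,1}. cf \<nu> n * x^(2*n)))"
    by (intro sums_add sums_mult2 nB_sums assms sums_If_finite_set) auto
  have "normBesselI \<nu> x \<le> normBesselI \<nu> 1 * x^4 + (\<Sum>n\<in>{0,1}. cf \<nu> n * x^(2*n))"
  proof (rule sums_le[OF _ nB_sums[OF assms(1)] S])
    fix n
    have c: "cf \<nu> n > 0" using cf_pos[OF assms(1)] by auto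
    show "cf \<nu> n * x^(2*n) \<le> cf \<nu> n * 1^(2*n) * x^4 + (if n \<in> {0,1} then cf \<nu> n * x^(2*n) else 0)"
    proof (cases "n \<in> {0,1}")
      case True thus ?thesis using c by simp
    next
      case False
      hence n2: "n \<ge> 2" by auto
      have "(x^2)^n \<le> (x^2)^2" using assms(2) n2 by (intro power_decreasing) auto
      hence "x^(2*n) \<le> x^4" by (simp add: power_mult[symmetric])
      thus ?thesis using False c by simp
    qed
  qed
  thus ?thesis by simp
qed

lemma upperB:
  assumes "\<nu> > -1" "x^2 \<ge> 1" "N \<ge> 1" "(\<nu>+1)/(\<nu>+1+real N) \<le> c"
  shows "normBesselI (\<nu>+1) x \<le> c * normBesselI \<nu> x + (\<Sum>n<N. cf (\<nu>+1) n) * x^(2*(N-1))"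
proof -
  have nu1: "\<nu> + 1 > -1" using assms by simp
  have c0: "c \<ge> 0" using assms by (smt (verit) divide_nonneg_pos of_nat_0_le_iff)
  have S: "(\<lambda>n. c * (cf \<nu> n * x^(2*n)) + (if n \<in> {..<N} then cf (\<nu>+1) n * x^(2*(N-1)) else 0))
      sums (c * normBesselI \<nu> x + (\<Sum>n<N. cf (\<nu>+1) n * x^(2*(N-1))))"
    by (intro sums_add sums_mult nB_sums assms sums_If_finite_set) auto
  have g: "\<And>n. cf (\<nu>+1) n * x^(2*n) = (\<nu>+1)/(\<nu>+1+real n) * (cf \<nu> n * x^(2*n))"
    using cf_shift[OF assms(1)] by simp
  have "normBesselI (\<nu>+1) x \<le> c * normBesselI \<nu> x + (\<Sum>n<N. cf (\<nu>+1) n * x^(2*(N-1)))"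
  proof (rule sums_le[OF _ nB_sums[OF nu1] S])
    fix n
    have cp: "cf \<nu> n > 0" "cf (\<nu>+1) n > 0" using cf_pos assms(1) nu1 by auto
    have fn: "cf \<nu> n * x^(2*n) \<ge> 0"
      using cp zero_le_even_power[of "2*n" x] by simp
    show "cf (\<nu>+1) n * x^(2*n) \<le> c * (cf \<nu> n * x^(2*n)) + (if n \<in> {..<N} then cf (\<nu>+1) n * x^(2*(N-1)) else 0)"
    proof (cases "n < N")
      case True
      have "(x^2)^n \<le> (x^2)^(N-1)" using assms(2) True by (intro power_increasing) auto
      hence "x^(2*n) \<le> x^(2*(N-1))" by (simp add: power_mult)
      hence "cf (\<nu>+1) n * x^(2*n) \<le> cf (\<nu>+1) n * x^(2*(N-1))"
        using cp by (intro mult_left_mono) auto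
      moreover have "c * (cf \<nu> n * x^(2*n)) \<ge> 0" using c0 fn by simp
      ultimately show ?thesis using True by simp
    next
      case False
      have "(\<nu>+1)/(\<nu>+1+real n) \<le> (\<nu>+1)/(\<nu>+1+real N)"
        using assms(1) False by (intro frac_le) auto
      hence "(\<nu>+1)/(\<nu>+1+real n) * (cf \<nu> n * x^(2*n)) \<le> c * (cf \<nu> n * x^(2*n))"
        using assms(4) fn by (intro mult_right_mono) auto
      thus ?thesis using False g by simp
    qed
  qed
  thus ?thesis by (simp add: sum_distrib_right)
qed

lemma iff1:
  fixes A B p :: real
  assumes "B > 0"
  shows "((1 - p) * (1 / B) + p * (A / B) > 1) \<longleftrightarrow> (1 - p + p * A > B)"
proof -
  have "(1 - p) * (1 / B) + p * (A / B) = (1 - p + p * A) / B" using assms by (simp add: field_simps)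
  thus ?thesis using assms by (simp add: less_divide_eq_1_pos)
qed

lemma iff2:
  fixes A B p :: real
  assumes "B > 0"
  shows "(1 > (1 - p) * (1 / B) + p * (A / B)) \<longleftrightarrow> (1 - p + p * A < B)"
proof -
  have "(1 - p) * (1 / B) + p * (A / B) = (1 - p + p * A) / B" using assms by (simp add: field_simps)
  thus ?thesis using assms by (simp add: divide_less_eq_1_pos)
qed

theorem theorem4p2:
  fixes \<nu> p q :: real
  assumes "\<nu> > -1"
  shows "(\<forall>x>0. (1 - p) * (1 / normBesselI (\<nu>+1) x) + p * (normBesselI \<nu> x / normBesselI (\<nu>+1) x) > 1
               \<and> 1 > (1 - q) * (1 / normBesselI (\<nu>+1) x) + q * (normBesselI \<nu> x / normBesselI (\<nu>+1) x))
         \<longleftrightarrow> (p \<ge> (\<nu>+1)/(\<nu>+2) \<and> q \<le> 0)"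
proof -
  define k where "k = (\<nu>+1)/(\<nu>+2)"
  have nu1: "\<nu> + 1 > -1" using assms by simp
  have Bgt: "\<And>x. x \<noteq> 0 \<Longrightarrow> normBesselI (\<nu>+1) x > 1" using nB_gt1[OF nu1] by blast
  have Agt: "\<And>x. x \<noteq> 0 \<Longrightarrow> normBesselI \<nu> x > 1" using nB_gt1[OF assms] by blast
  have C: "\<And>x. x > 0 \<Longrightarrow>
     ((1 - p) * (1 / normBesselI (\<nu>+1) x) + p * (normBesselI \<nu> x / normBesselI (\<nu>+1) x) > 1
      \<and> 1 > (1 - q) * (1 / normBesselI (\<nu>+1) x) + q * (normBesselI \<nu> x / normBesselI (\<nu>+1) x))
     \<longleftrightarrow> (1 - p + p * normBesselI \<nu> x > normBesselI (\<nu>+1) x \<and> 1 - q + q * normBesselI \<nu> x < normBesselI (\<nu>+1) x)"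
  proof -
    fix x :: real assume "x > 0"
    hence "normBesselI (\<nu>+1) x > 0" using Bgt[of x] by simp
    thus "?thesis x" using iff1 iff2 by blast
  qed
  show ?thesis unfolding k_def[symmetric]
  proof
    assume H0: "\<forall>x>0. (1 - p) * (1 / normBesselI (\<nu>+1) x) + p * (normBesselI \<nu> x / normBesselI (\<nu>+1) x) > 1
               \<and> 1 > (1 - q) * (1 / normBesselI (\<nu>+1) x) + q * (normBesselI \<nu> x / normBesselI (\<nu>+1) x)"
    have H: "\<And>x. x > 0 \<Longrightarrow> 1 - p + p * normBesselI \<nu> x > normBesselI (\<nu>+1) x \<and> 1 - q + q * normBesselI \<nu> x < normBesselI (\<nu>+1) x"
      using H0 C by blast
    show "k \<le> p \<and> q \<le> 0"
    proof
      show "k \<le> p"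
      proof (rule ccontr)
        assume pk: "\<not> k \<le> p"
        show False
        proof (cases "p \<le> 0")
          case True
          have "1 - p + p * normBesselI \<nu> 1 = 1 + p * (normBesselI \<nu> 1 - 1)" by algebra
          also have "\<dots> \<le> 1" using True Agt[of 1] by (simp add: mult_nonpos_nonneg)
          finally show False using H[of 1] Bgt[of 1] by simp
        next
          case False
          hence p0: "p > 0" by simp
          define a1 where "a1 = cf \<nu> 1"
          define A1 where "A1 = normBesselI \<nu> 1"
          have a1p: "a1 > 0" unfolding a1_def using cf_pos[OF assms] by auto
          have A1p: "A1 > 0" unfolding A1_def using Agt[of 1] by simp
          define t where "t = min 1 ((k-p)*a1/(p*A1))"
          have kp: "k - p > 0" using pk by simp
          have t0: "t > 0" unfolding t_def using kp a1p A1p p0 by auto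
          have t1: "t \<le> 1" unfolding t_def by simp
          have t2: "t \<le> (k-p)*a1/(p*A1)" unfolding t_def by simp
          hence t3: "p*A1*t \<le> (k-p)*a1" using p0 A1p by (simp add: le_divide_eq mult.commute)
          define x where "x = sqrt t"
          have x0: "x > 0" unfolding x_def using t0 by simp
          have xt: "x^2 = t" unfolding x_def using t0 by simp
          have x4: "x^4 = t*t" using xt by (metis power2_eq_square power_mult numeral_Bit0 mult_2_right numeral_One one_add_one)
          have UA: "normBesselI \<nu> x \<le> A1 * (t*t) + (1 + a1 * t)"
            using upperA[OF assms, of x] xt t1 x4 unfolding A1_def a1_def by simp
          have LB0: "(\<Sum>n\<in>{0,1}. cf (\<nu>+1) n * x^(2*n)) \<le> normBesselI (\<nu>+1) x"
            by (rule nB_ge_finite[OF nu1]) auto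
          have cf1: "cf (\<nu>+1) 1 = k * a1" unfolding a1_def k_def using cf_shift[OF assms, of 1]
            by (simp add: add.assoc)
          have LB: "1 + k*a1*t \<le> normBesselI (\<nu>+1) x" using LB0 cf1 xt by simp
          have "p * (normBesselI \<nu> x - 1) \<le> p * (A1*(t*t) + a1*t)"
            using UA p0 by (intro mult_left_mono) auto
          also have "\<dots> = (p*A1*t)*t + p*a1*t" by (simp add: algebra_simps)
          also have "\<dots> \<le> (k-p)*a1*t + p*a1*t" using t3 t0 by (intro add_right_mono mult_right_mono) auto
          also have "\<dots> = k*a1*t" by (simp add: algebra_simps)
          finally have "1 - p + p * normBesselI \<nu> x \<le> normBesselI (\<nu>+1) x" using LB by (simp add: algebra_simps)
          thus False using H[OF x0] by simp
        qed
      qed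
    next
      show "q \<le> 0"
      proof (rule ccontr)
        assume "\<not> q \<le> 0"
        hence q0: "q > 0" by simp
        define c where "c = q/2"
        define N where "N = nat \<lceil>2*(\<nu>+1)/q\<rceil> + 1"
        have N1: "N \<ge> 1" unfolding N_def by simp
        have Nbig: "real N > 2*(\<nu>+1)/q" unfolding N_def by linarith
        have "c * real N > \<nu> + 1" using Nbig q0 unfolding c_def by (simp add: field_simps)
        moreover have "c * (\<nu>+1) > 0" using q0 assms unfolding c_def by simp
        ultimately have "\<nu> + 1 \<le> c * (\<nu>+1+real N)" by (simp add: algebra_simps)
        hence cN: "(\<nu>+1)/(\<nu>+1+real N) \<le> c" using assms by (simp add: divide_le_eq)
        define S where "S = (\<Sum>n<N. cf (\<nu>+1) n)"
        have S0: "S \<ge> 0" unfolding S_def using cf_pos[OF nu1] by (intro sum_nonneg) (simp add: less_imp_le)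
        define aN where "aN = cf \<nu> N"
        have aN0: "aN > 0" unfolding aN_def using cf_pos[OF assms] by auto
        define T where "T = max 1 (2*(S+q)/(q*aN))"
        have T1: "T \<ge> 1" unfolding T_def by simp
        have T2: "T \<ge> 2*(S+q)/(q*aN)" unfolding T_def by simp
        hence T3: "c*aN*T \<ge> S+q" using q0 aN0 unfolding c_def by (simp add: divide_le_eq field_simps)
        define x where "x = sqrt T"
        have x0: "x > 0" unfolding x_def using T1 by simp
        have xt: "x^2 = T" unfolding x_def using T1 by simp
        define X where "X = T^(N-1)"
        have X1: "X \<ge> 1" unfolding X_def using T1 by simp
        have xX: "x^(2*(N-1)) = X" unfolding X_def by (simp add: power_mult xt)
        have UB: "normBesselI (\<nu>+1) x \<le> c * normBesselI \<nu> x + S * X"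
          using upperB[OF assms _ N1 cN, of x] xt T1 xX unfolding S_def by simp
        have LA0: "(\<Sum>n\<in>{N}. cf \<nu> n * x^(2*n)) \<le> normBesselI \<nu> x"
          by (rule nB_ge_finite[OF assms]) auto
        obtain M where NM: "N = Suc M" using N1 by (cases N) auto
        have "x^(2*N) = T * X" unfolding X_def NM using xt by (simp add: power_mult power2_eq_square)
        hence LA: "aN * T * X \<le> normBesselI \<nu> x" using LA0 unfolding aN_def by simp
        have "(S+q)*X \<le> c*aN*T*X" using T3 X1 by (intro mult_right_mono) auto
        also have "\<dots> \<le> c * normBesselI \<nu> x" using LA q0 unfolding c_def
          by (simp add: mult.assoc mult_left_mono)
        finally have "S*X + q*X \<le> c * normBesselI \<nu> x" by (simp add: algebra_simps)
        moreover have "q \<le> q*X" using q0 X1 by simp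
        ultimately have "normBesselI (\<nu>+1) x \<le> 1 - q + q * normBesselI \<nu> x"
          using UB unfolding c_def by linarith
        thus False using H[OF x0] by simp
      qed
    qed
  next
    assume pq: "k \<le> p \<and> q \<le> 0"
    show "\<forall>x>0. (1 - p) * (1 / normBesselI (\<nu>+1) x) + p * (normBesselI \<nu> x / normBesselI (\<nu>+1) x) > 1
               \<and> 1 > (1 - q) * (1 / normBesselI (\<nu>+1) x) + q * (normBesselI \<nu> x / normBesselI (\<nu>+1) x)"
    proof (intro allI impI)
      fix x :: real assume x0: "x > 0"
      have A: "normBesselI \<nu> x > 1" using Agt x0 by simp
      have B: "normBesselI (\<nu>+1) x > 1" using Bgt x0 by simp
      have F: "normBesselI (\<nu>+1) x < 1 + k * (normBesselI \<nu> x - 1)"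
      proof -
        have e: "(1-k) + k * normBesselI \<nu> x = 1 + k * (normBesselI \<nu> x - 1)" by algebra
        have "normBesselI (\<nu>+1) x < (1-k) + k * normBesselI \<nu> x"
          using F1[OF assms, of x] x0 unfolding k_def by simp
        thus ?thesis using e by simp
      qed
      have "k * (normBesselI \<nu> x - 1) \<le> p * (normBesselI \<nu> x - 1)"
        using pq A by (intro mult_right_mono) auto
      hence c1: "1 - p + p * normBesselI \<nu> x > normBesselI (\<nu>+1) x" using F by (simp add: algebra_simps)
      have "q * (normBesselI \<nu> x - 1) \<le> 0" using pq A by (simp add: mult_nonpos_nonneg)
      hence c2: "1 - q + q * normBesselI \<nu> x < normBesselI (\<nu>+1) x" using B by (simp add: algebra_simps)
      show "(1 - p) * (1 / normBesselI (\<nu>+1) x) + p * (normBesselI \<nu> x / normBesselI (\<nu>+1) x) > 1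
               \<and> 1 > (1 - q) * (1 / normBesselI (\<nu>+1) x) + q * (normBesselI \<nu> x / normBesselI (\<nu>+1) x)"
        using C[OF x0] c1 c2 by blast
    qed
  qed
qed

end
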